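(* Let $M=\mathbb R^3$ with the Euclidean metric, $\mathcal D=[0,1]$, and let $r,h:I\to\mathbb R$ be smooth with $r>0$ and $h$ nowhere zero. Consider the path of helices $c(s,t)=(r(s)\cos t,\ r(s)\sin t,\ h(s)t)$. Then $c$ is horizontal and a geodesic if and only if $h'=0$ and \[ \Big((r')^2\Big(\sqrt{r^2+h^2}+\frac{1}{\sqrt{r^2+h^2}}\Big)\Big)'=0. \]
   Context: $I=[0,1]$; $'$ denotes $\partial_s$. For a path $c:I\times\mathcal D\to\mathbb R^3$ of immersed curves write $\dot c=\partial_t c$, $c'=\partial_s c$, $\omega=|\dot c|>0$, $T=\dot c/\omega$, and $\nabla_TX=\omega^{-1}\partial_tX$ for vector fields $X$ along $c$. With $\eta=c'-\nabla_T\nabla_T c'$, the path is called horizontal if $\langle\eta,T\rangle=0$ everywhere on $I\times\mathcal D$. The first order Sobolev metric is $G_{\gamma}(h,k)=\int_{\mathcal D} \big(\langle h,k\rangle+\langle\nabla_Th,\nabla_Tk\rangle\big)\,\omega\,dt$, the speed is $\nu(s)=\sqrt{G_{c(s,\cdot)}(c',c')}$, and following the paper the path is called a geodesic if $\nu$ is constant in $s$. *)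

theory Defs
  imports "HOL-Analysis.Analysis"
begin

text \<open>Parameter interval I = [0,1] (variable s) and curve domain D = [0,1] (variable t).
  All derivatives are taken within the closed interval (one-sided at the endpoints).\<close>

definition Iv :: "real set" where "Iv = {0..1}"
definition Dv :: "real set" where "Dv = {0..1}"

definition smooth_on :: "real set \<Rightarrow> (real \<Rightarrow> real) \<Rightarrow> bool" where
  "smooth_on S f \<longleftrightarrow> (\<exists>Df. Df 0 = f \<and>
      (\<forall>k. \<forall>x\<in>S. (Df k has_real_derivative Df (Suc k) x) (at x within S)))"

definition dI :: "(real \<Rightarrow> real) \<Rightarrow> real \<Rightarrow> real" where
  "dI f s = vector_derivative f (at s within Iv)"

definition pds :: "(real \<Rightarrow> real \<Rightarrow> real^3) \<Rightarrow> real \<Rightarrow> real \<Rightarrow> real^3" where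
  "pds c s t = vector_derivative (\<lambda>s'. c s' t) (at s within Iv)"

definition pdt :: "(real \<Rightarrow> real \<Rightarrow> real^3) \<Rightarrow> real \<Rightarrow> real \<Rightarrow> real^3" where
  "pdt c s t = vector_derivative (\<lambda>t'. c s t') (at t within Dv)"

definition cdot :: "(real \<Rightarrow> real^3) \<Rightarrow> real \<Rightarrow> real^3" where
  "cdot \<gamma> t = vector_derivative \<gamma> (at t within Dv)"

definition omega :: "(real \<Rightarrow> real^3) \<Rightarrow> real \<Rightarrow> real" where
  "omega \<gamma> t = norm (cdot \<gamma> t)"

definition Tvec :: "(real \<Rightarrow> real^3) \<Rightarrow> real \<Rightarrow> real^3" where
  "Tvec \<gamma> t = (1 / omega \<gamma> t) *\<^sub>R cdot \<gamma> t"

definition nablaT :: "(real \<Rightarrow> real^3) \<Rightarrow> (real \<Rightarrow> real^3) \<Rightarrow> real \<Rightarrow> real^3" where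
  "nablaT \<gamma> X t = (1 / omega \<gamma> t) *\<^sub>R vector_derivative X (at t within Dv)"

definition eta :: "(real \<Rightarrow> real \<Rightarrow> real^3) \<Rightarrow> real \<Rightarrow> real \<Rightarrow> real^3" where
  "eta c s t = pds c s t - nablaT (c s) (nablaT (c s) (pds c s)) t"

definition horizontal :: "(real \<Rightarrow> real \<Rightarrow> real^3) \<Rightarrow> bool" where
  "horizontal c \<longleftrightarrow> (\<forall>s\<in>Iv. \<forall>t\<in>Dv. eta c s t \<bullet> Tvec (c s) t = 0)"

definition Gmet :: "(real \<Rightarrow> real^3) \<Rightarrow> (real \<Rightarrow> real^3) \<Rightarrow> (real \<Rightarrow> real^3) \<Rightarrow> real" where
  "Gmet \<gamma> h k = integral Dv (\<lambda>t. (h t \<bullet> k t + nablaT \<gamma> h t \<bullet> nablaT \<gamma> k t) * omega \<gamma> t)"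

definition speed :: "(real \<Rightarrow> real \<Rightarrow> real^3) \<Rightarrow> real \<Rightarrow> real" where
  "speed c s = sqrt (Gmet (c s) (pds c s) (pds c s))"

text \<open>Geodesic in the sense of the paper: the speed nu is constant in s.\<close>
definition geodesic :: "(real \<Rightarrow> real \<Rightarrow> real^3) \<Rightarrow> bool" where
  "geodesic c \<longleftrightarrow> (\<exists>v. \<forall>s\<in>Iv. speed c s = v)"

definition helix_path :: "(real \<Rightarrow> real) \<Rightarrow> (real \<Rightarrow> real) \<Rightarrow> real \<Rightarrow> real \<Rightarrow> real^3" where
  "helix_path r h s t = vector [r s * cos t, r s * sin t, h s * t]"

end

theory Submission
  imports Defs
begin

lemma vd01: "(x::real) \<in> {0..1} \<Longrightarrow> (f has_vector_derivative f') (at x within {0..1}) \<Longrightarrow> vector_derivative f (at x within {0..1}) = f'"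
  using vector_derivative_within_cbox[of 0 1 x f f'] by simp

lemma vec3: "(vector [a,b,c] :: real^3) = a *\<^sub>R axis 1 1 + b *\<^sub>R axis 2 1 + c *\<^sub>R axis 3 1"
  by (simp add: vec_eq_iff forall_3 axis_def)

lemma inner3: "(vector [a,b,c] :: real^3) \<bullet> vector [d,e,f] = a*d+b*e+c*f"
  by (simp add: inner_vec_def sum_3)

lemma scale3: "k *\<^sub>R (vector [a,b,c] :: real^3) = vector [k*a,k*b,k*c]"
  by (simp add: vec_eq_iff forall_3)
lemma diff3: "(vector [a,b,c] :: real^3) - vector [d,e,f] = vector [a-d,b-e,c-f]"
  by (simp add: vec_eq_iff forall_3)

lemma hvd3:
  assumes "(f1 has_real_derivative d1) (at x within S)" "(f2 has_real_derivative d2) (at x within S)" "(f3 has_real_derivative d3) (at x within S)"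
  shows "((\<lambda>x. vector [f1 x, f2 x, f3 x] :: real^3) has_vector_derivative vector [d1,d2,d3]) (at x within S)"
proof -
  have a: "((\<lambda>x. f1 x *\<^sub>R (axis 1 1::real^3)) has_vector_derivative d1 *\<^sub>R axis 1 1) (at x within S)"
    using has_vector_derivative_scaleR[OF assms(1) has_vector_derivative_const] by simp
  have b: "((\<lambda>x. f2 x *\<^sub>R (axis 2 1::real^3)) has_vector_derivative d2 *\<^sub>R axis 2 1) (at x within S)"
    using has_vector_derivative_scaleR[OF assms(2) has_vector_derivative_const] by simp
  have c: "((\<lambda>x. f3 x *\<^sub>R (axis 3 1::real^3)) has_vector_derivative d3 *\<^sub>R axis 3 1) (at x within S)"
    using has_vector_derivative_scaleR[OF assms(3) has_vector_derivative_const] by simp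
  show ?thesis unfolding vec3 by (intro has_vector_derivative_add a b c)
qed

theorem mainTheorem7:
  fixes r h :: "real \<Rightarrow> real"
  assumes "smooth_on Iv r" and "smooth_on Iv h"
    and "\<forall>s\<in>Iv. r s > 0" and "\<forall>s\<in>Iv. h s \<noteq> 0"
  shows "(horizontal (helix_path r h) \<and> geodesic (helix_path r h)) \<longleftrightarrow>
    ((\<forall>s\<in>Iv. dI h s = 0) \<and>
     (\<forall>s\<in>Iv. dI (\<lambda>x. (dI r x)\<^sup>2 * (sqrt ((r x)\<^sup>2 + (h x)\<^sup>2) + 1 / sqrt ((r x)\<^sup>2 + (h x)\<^sup>2))) s = 0))"
proof -
  obtain Dr where Dr0: "Dr 0 = r" and Dr: "\<And>k x. x\<in>Iv \<Longrightarrow> (Dr k has_real_derivative Dr (Suc k) x) (at x within Iv)"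
    using assms(1) unfolding smooth_on_def by blast
  obtain Dh where Dh0: "Dh 0 = h" and Dh: "\<And>k x. x\<in>Iv \<Longrightarrow> (Dh k has_real_derivative Dh (Suc k) x) (at x within Iv)"
    using assms(2) unfolding smooth_on_def by blast
  define c where "c = helix_path r h"
  define w where "w s = sqrt ((r s)\<^sup>2 + (h s)\<^sup>2)" for s
  have dr: "(r has_real_derivative Dr 1 s) (at s within Iv)" if "s \<in> Iv" for s
    using Dr[OF that, of 0] Dr0 by simp
  have dh: "(h has_real_derivative Dh 1 s) (at s within Iv)" if "s \<in> Iv" for s
    using Dh[OF that, of 0] Dh0 by simp
  have dIr: "dI r s = Dr 1 s" if "s \<in> Iv" for s
    unfolding dI_def using vd01 that dr[OF that] unfolding Iv_def has_real_derivative_iff_has_vector_derivative by blast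
  have dIh: "dI h s = Dh 1 s" if "s \<in> Iv" for s
    unfolding dI_def using vd01 that dh[OF that] unfolding Iv_def has_real_derivative_iff_has_vector_derivative by blast
  have wpos: "w s > 0" if "s \<in> Iv" for s
    using assms(3) that unfolding w_def by (auto intro!: add_pos_nonneg)
  have P1: "pds c s t = vector [Dr 1 s * cos t, Dr 1 s * sin t, Dh 1 s * t]" if "s \<in> Iv" for s t
    unfolding pds_def c_def helix_path_def
    apply (rule vd01[of s, folded Iv_def])
    using that apply (simp add: Iv_def)
    apply (rule hvd3)
    by (auto intro!: derivative_eq_intros dr dh that)
  have P2: "cdot (c s) t = vector [-(r s * sin t), r s * cos t, h s]" if "t \<in> Dv" for s t
    unfolding cdot_def c_def helix_path_def
    apply (rule vd01[of t, folded Dv_def])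
    using that apply (simp add: Dv_def)
    apply (rule hvd3)
    by (auto intro!: derivative_eq_intros)
  have P3: "omega (c s) t = w s" if "t \<in> Dv" for s t
    unfolding omega_def P2[OF that] w_def norm_eq_sqrt_inner inner3
    by (simp add: power2_eq_square[symmetric] algebra_simps) (metis add.commute distrib_right mult_1 sin_cos_squared_add)
  have P4: "nablaT (c s) (pds c s) t = vector [-(Dr 1 s * sin t) / w s, Dr 1 s * cos t / w s, Dh 1 s / w s]"
    if "s \<in> Iv" "t \<in> Dv" for s t
  proof -
    have e: "pds c s = (\<lambda>t. vector [Dr 1 s * cos t, Dr 1 s * sin t, Dh 1 s * t])"
      using P1[OF that(1)] by auto
    have "vector_derivative (pds c s) (at t within Dv) = vector [-(Dr 1 s * sin t), Dr 1 s * cos t, Dh 1 s]"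
      unfolding e
      apply (rule vd01[of t, folded Dv_def])
      using that apply (simp add: Dv_def)
      apply (rule hvd3)
      by (auto intro!: derivative_eq_intros)
    then show ?thesis unfolding nablaT_def P3[OF that(2)] by (simp add: scale3)
  qed
  have P5: "nablaT (c s) (nablaT (c s) (pds c s)) t = vector [-(Dr 1 s * cos t) / (w s)^2, -(Dr 1 s * sin t) / (w s)^2, 0]"
    if "s \<in> Iv" "t \<in> Dv" for s t
  proof -
    have "((\<lambda>t. vector [-(Dr 1 s * sin t) / w s, Dr 1 s * cos t / w s, Dh 1 s / w s] :: real^3) has_vector_derivative
       vector [-(Dr 1 s * cos t) / w s, -(Dr 1 s * sin t) / w s, 0]) (at t within Dv)"
      using wpos[OF that(1)] by (intro hvd3) (auto intro!: derivative_eq_intros)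
    then have "(nablaT (c s) (pds c s) has_vector_derivative
       vector [-(Dr 1 s * cos t) / w s, -(Dr 1 s * sin t) / w s, 0]) (at t within Dv)"
      by (rule has_vector_derivative_transform[rotated 2]) (use that P4 in auto)
    then have "vector_derivative (nablaT (c s) (pds c s)) (at t within Dv) = vector [-(Dr 1 s * cos t) / w s, -(Dr 1 s * sin t) / w s, 0]"
      using vd01[of t, folded Dv_def] that by (simp add: Dv_def)
    then show ?thesis unfolding nablaT_def P3[OF that(2)] by (simp add: scale3 power2_eq_square)
  qed
  have P6: "eta c s t \<bullet> Tvec (c s) t = h s * Dh 1 s * t / w s" if "s \<in> Iv" "t \<in> Dv" for s t
  proof -
    have "eta c s t \<bullet> Tvec (c s) t = (1 / w s) * (
      (Dr 1 s * cos t + Dr 1 s * cos t / (w s)^2) * (-(r s * sin t)) + (Dr 1 s * sin t + Dr 1 s * sin t / (w s)^2) * (r s * cos t)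
      + Dh 1 s * t * h s)"
      unfolding eta_def Tvec_def P1[OF that(1)] P5[OF that] P2[OF that(2)] P3[OF that(2)] diff3 scale3 inner3
      by (simp add: ring_distribs)
    also have "\<dots> = h s * Dh 1 s * t / w s" by (simp add: algebra_simps)
    finally show ?thesis .
  qed
  have P7: "Gmet (c s) (pds c s) (pds c s) = integral Dv (\<lambda>t. ((Dr 1 s)\<^sup>2 + (Dh 1 s * t)\<^sup>2 + ((Dr 1 s)\<^sup>2 + (Dh 1 s)\<^sup>2) / (w s)\<^sup>2) * w s)"
    if "s \<in> Iv" for s
    unfolding Gmet_def
  proof (rule integral_cong)
    fix t assume t: "t \<in> Dv"
    show "(pds c s t \<bullet> pds c s t + nablaT (c s) (pds c s) t \<bullet> nablaT (c s) (pds c s) t) * omega (c s) t =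
      ((Dr 1 s)\<^sup>2 + (Dh 1 s * t)\<^sup>2 + ((Dr 1 s)\<^sup>2 + (Dh 1 s)\<^sup>2) / (w s)\<^sup>2) * w s"
    proof -
      have sc: "(sin t)\<^sup>2 * X + (cos t)\<^sup>2 * X = X" for X by (metis distrib_right mult_1 sin_cos_squared_add)
      have a: "pds c s t \<bullet> pds c s t = (Dr 1 s)\<^sup>2 + (Dh 1 s * t)\<^sup>2"
        unfolding P1[OF that] inner3 using sc[of "(Dr 1 s)\<^sup>2"]
        by (simp add: power2_eq_square algebra_simps)
      have b: "nablaT (c s) (pds c s) t \<bullet> nablaT (c s) (pds c s) t = ((Dr 1 s)\<^sup>2 + (Dh 1 s)\<^sup>2) / (w s)\<^sup>2"
        unfolding P4[OF that t] inner3 using sc[of "(Dr 1 s)\<^sup>2 / (w s)\<^sup>2"]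
        by (simp add: power2_eq_square algebra_simps add_divide_distrib)
      show ?thesis unfolding a b P3[OF t] ..
    qed
  qed
  define F where "F x = (Dr 1 x)\<^sup>2 * (sqrt ((r x)\<^sup>2 + (h x)\<^sup>2) + 1 / sqrt ((r x)\<^sup>2 + (h x)\<^sup>2))" for x
  have dF: "\<exists>D. (F has_real_derivative D) (at s within Iv)" if "s \<in> Iv" for s
  proof -
    have Qpos: "0 < (r s)\<^sup>2 + (h s)\<^sup>2" using assms(3) that by (auto intro!: add_pos_nonneg)
    have q: "((\<lambda>x. (r x)\<^sup>2 + (h x)\<^sup>2) has_real_derivative (2*r s*Dr 1 s + 2*h s*Dh 1 s)) (at s within Iv)"
      by (auto intro!: derivative_eq_intros dr[OF that] dh[OF that])
    have sq: "((\<lambda>x. sqrt ((r x)\<^sup>2 + (h x)\<^sup>2)) has_real_derivative (inverse (sqrt ((r s)\<^sup>2 + (h s)\<^sup>2)) / 2 * (2*r s*Dr 1 s + 2*h s*Dh 1 s))) (at s within Iv)"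
      by (rule DERIV_chain2[OF DERIV_real_sqrt[OF Qpos] q])
    have isq: "\<exists>E. ((\<lambda>x. 1 / sqrt ((r x)\<^sup>2 + (h x)\<^sup>2)) has_real_derivative E) (at s within Iv)"
      apply (rule exI)
      apply (rule DERIV_divide[OF DERIV_const sq])
      using Qpos by (metis less_irrefl real_sqrt_eq_zero_cancel_iff)
    then obtain E where E: "((\<lambda>x. 1 / sqrt ((r x)\<^sup>2 + (h x)\<^sup>2)) has_real_derivative E) (at s within Iv)" ..
    show ?thesis unfolding F_def
      by (rule exI, rule DERIV_mult[OF DERIV_power[OF Dr[OF that, of 1]] DERIV_add[OF sq E]])
  qed
  have hor: "horizontal c \<longleftrightarrow> (\<forall>s\<in>Iv. Dh 1 s = 0)"
    unfolding horizontal_def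
  proof
    assume H: "\<forall>s\<in>Iv. \<forall>t\<in>Dv. eta c s t \<bullet> Tvec (c s) t = 0"
    show "\<forall>s\<in>Iv. Dh 1 s = 0"
    proof
      fix s assume s: "s \<in> Iv"
      have one: "1 \<in> Dv" by (simp add: Dv_def)
      have "h s * Dh 1 s * 1 / w s = 0" using H s one P6[OF s one] by simp
      then show "Dh 1 s = 0" using assms(4) s wpos[OF s] by simp
    qed
  next
    assume "\<forall>s\<in>Iv. Dh 1 s = 0"
    then show "\<forall>s\<in>Iv. \<forall>t\<in>Dv. eta c s t \<bullet> Tvec (c s) t = 0" using P6 by simp
  qed
  have Fnn: "F s \<ge> 0" for s unfolding F_def by simp
  have spd: "speed c s = sqrt (F s)" if H: "\<forall>s\<in>Iv. Dh 1 s = 0" and s: "s \<in> Iv" for s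
  proof -
    have "Gmet (c s) (pds c s) (pds c s) = ((Dr 1 s)\<^sup>2 + (Dr 1 s)\<^sup>2 / (w s)\<^sup>2) * w s"
      unfolding P7[OF s] using H s by (simp add: Dv_def)
    also have "\<dots> = F s" unfolding F_def w_def[symmetric] using wpos[OF s]
      by (simp add: field_simps power2_eq_square)
    finally show ?thesis unfolding speed_def by simp
  qed
  have geo: "geodesic c \<longleftrightarrow> (\<exists>v. \<forall>s\<in>Iv. F s = v)" if H: "\<forall>s\<in>Iv. Dh 1 s = 0"
  proof
    assume "geodesic c"
    then obtain v where v: "\<forall>s\<in>Iv. speed c s = v" unfolding geodesic_def by blast
    have "\<forall>s\<in>Iv. F s = v\<^sup>2"
    proof
      fix s assume s: "s \<in> Iv"
      have "sqrt (F s) = v" using v s spd[OF H s] by simp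
      then show "F s = v\<^sup>2" using Fnn[of s] by auto
    qed
    then show "\<exists>v. \<forall>s\<in>Iv. F s = v" by blast
  next
    assume "\<exists>v. \<forall>s\<in>Iv. F s = v"
    then obtain v where "\<forall>s\<in>Iv. F s = v" by blast
    then show "geodesic c" unfolding geodesic_def using spd[OF H] by metis
  qed
  define G where "G x = (dI r x)\<^sup>2 * (sqrt ((r x)\<^sup>2 + (h x)\<^sup>2) + 1 / sqrt ((r x)\<^sup>2 + (h x)\<^sup>2))" for x
  have GF: "G x = F x" if "x \<in> Iv" for x unfolding G_def F_def dIr[OF that] ..
  have der: "(\<forall>s\<in>Iv. dI G s = 0) \<longleftrightarrow> (\<exists>v. \<forall>s\<in>Iv. F s = v)"
  proof
    assume Z: "\<forall>s\<in>Iv. dI G s = 0"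
    have "(F has_field_derivative 0) (at s within Iv)" if s: "s \<in> Iv" for s
    proof -
      obtain D where D: "(F has_real_derivative D) (at s within Iv)" using dF[OF s] by blast
      have "(G has_vector_derivative D) (at s within Iv)"
        using D unfolding has_real_derivative_iff_has_vector_derivative
        by (rule has_vector_derivative_transform[rotated 2]) (use s GF in auto)
      then have "dI G s = D" unfolding dI_def using vd01 s by (simp add: Iv_def)
      then show ?thesis using D Z s by simp
    qed
    then show "\<exists>v. \<forall>s\<in>Iv. F s = v"
      using has_field_derivative_zero_constant[of Iv F] by (simp add: Iv_def)
  next
    assume "\<exists>v. \<forall>s\<in>Iv. F s = v"
    then obtain v where v: "\<forall>s\<in>Iv. F s = v" by blast
    show "\<forall>s\<in>Iv. dI G s = 0"
    proof
      fix s assume s: "s \<in> Iv"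
      have "(G has_vector_derivative 0) (at s within Iv)"
        by (rule has_vector_derivative_transform[OF s _ has_vector_derivative_const[of v]]) (use v GF in auto)
      then show "dI G s = 0" unfolding dI_def using vd01 s by (simp add: Iv_def)
    qed
  qed
  have dh0: "(\<forall>s\<in>Iv. dI h s = 0) \<longleftrightarrow> (\<forall>s\<in>Iv. Dh 1 s = 0)" using dIh by auto
  show ?thesis
    unfolding c_def[symmetric] G_def[symmetric] dh0 der hor using geo by blast
qed
end
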